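(* Let $a\neq 0$ be a real constant and let $M$ be the open subset $\{r>0\}$ of $\mathbb{R}^4$ with coordinates $(t,\phi,r,z)$, equipped with the Som-Raychaudhuri metric $$g=(dt+a r^{2}\,d\phi)^{2}-r^{2}\,d\phi^{2}-dr^{2}-dz^{2}.$$ Then $(M,g)$ has the following properties: (i) its Ricci tensor is cyclic parallel; (ii) it is $2$-quasi-Einstein; (iii) it is an $Ein(3)$ manifold; (iv) it is generalized quasi-Einstein both in the sense of Chaki and in the sense of De and Ghosh; (v) it is pseudo quasi-Einstein; (vi) it is special Ricci generalized pseudosymmetric, i.e. $R\cdot R=Q(S,R)$; (vii) it is a manifold of pseudosymmetric Weyl conformal curvature tensor; (viii) it is of generalized Roter type; (ix) its Ricci tensor is Riemann compatible, conformal (Weyl) compatible, concircular compatible and conharmonic compatible.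
   Context: Notation for a semi-Riemannian manifold $(M,g)$ of dimension $n$ (here $n=4$): $\nabla$ is the Levi-Civita connection, $\mathcal R(X,Y)=[\nabla_X,\nabla_Y]-\nabla_{[X,Y]}$, $R(X_1,X_2,X_3,X_4)=g(\mathcal R(X_1,X_2)X_3,X_4)$, $S$ is the Ricci tensor, $\kappa$ the scalar curvature, $\mathcal S$ the Ricci operator ($g(X,\mathcal SY)=S(X,Y)$), $S^2(X,Y)=S(X,\mathcal SY)$, $S^3(X,Y)=S(X,\mathcal S^2Y)$. For a symmetric $(0,2)$-tensor $A$, $(X\wedge_A Y)Z=A(Y,Z)X-A(X,Z)Y$. Weyl conformal operator $\mathcal C(X,Y)=\mathcal R(X,Y)-\frac{1}{n-2}\big(X\wedge_g\mathcal SY+\mathcal SX\wedge_g Y-\frac{\kappa}{n-1}X\wedge_g Y\big)$; concircular operator $\mathcal W(X,Y)=\mathcal R(X,Y)-\frac{\kappa}{n(n-1)}X\wedge_gY$; conharmonic operator $\mathcal K(X,Y)=\mathcal R(X,Y)-\frac{1}{n-2}(X\wedge_g\mathcal SY+\mathcal SX\wedge_gY)$; the $(0,4)$-tensors $C,W,K$ are obtained from these as $R$ from $\mathcal R$. For an endomorphism $\mathcal H$ and a $(0,k)$-tensor $T$, $(\mathcal H\cdot T)(X_1,\dots,X_k)=-\sum_{i}T(X_1,\dots,\mathcal HX_i,\dots,X_k)$; $(R\cdot T)(X_1,\dots,X_k,X,Y)=(\mathcal R(X,Y)\cdot T)(X_1,\dots,X_k)$, similarly $C\cdot T$ with $\mathcal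 C(X,Y)$, and $Q(A,T)(X_1,\dots,X_k,X,Y)=((X\wedge_AY)\cdot T)(X_1,\dots,X_k)$. Kulkarni–Nomizu product: $(A\wedge E)(X_1,X_2,X,Y)=A(X_1,Y)E(X_2,X)+A(X_2,X)E(X_1,Y)-A(X_1,X)E(X_2,Y)-A(X_2,Y)E(X_1,X)$. Definitions: $M$ is $k$-quasi-Einstein if $\mathrm{rank}(S-\alpha g)=k$ for some smooth function $\alpha$ (quasi-Einstein means $k=1$). $M$ is $Ein(3)$ if $S^3+a_3S^2+a_4S+a_5g=0$ for some smooth functions $a_i$. The Ricci tensor is cyclic parallel if $(\nabla_{X_1}S)(X_2,X_3)+(\nabla_{X_2}S)(X_3,X_1)+(\nabla_{X_3}S)(X_1,X_2)=0$. Let $U$ be the set of points where $S-\nu_1g-\nu_2\xi\otimes\xi\neq0$ for all scalars $\nu_1,\nu_2$ and $1$-forms $\xi$. $M$ is generalized quasi-Einstein in the sense of Chaki (resp. De and Ghosh) if on $U$, $S=\alpha g+\beta\Pi\otimes\Pi+\gamma(\Pi\otimes\Phi+\Phi\otimes\Pi)$ (resp. $S=\alpha g+\beta\Pi\otimes\Pi+\gamma\Phi\otimes\Phi$) for smooth functions $\alpha,\beta,\gamma$ and $1$-forms $\Pi,\Phi$ whose associated vector fields are mutually orthogonal. $M$ is pseudo quasi-Einstein if on $U$, $S=\alpha g+\beta\Pi\otimes\Pi+\gamma E$ for smooth functions $\alpha,\beta,\gamma$, a $1$-form $\Pi$ and a trace-free symmetric $(0,2)$-tensor $E$ with $E(X,V)=0$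 for all $X$, $V$ being the vector field associated to $\Pi$. $M$ is a manifold of pseudosymmetric Weyl conformal curvature tensor if $C\cdot C=L\,Q(g,C)$ for some smooth function $L$. $M$ is of generalized Roter type if $R=L_1g\wedge g+L_2g\wedge S+L_3S\wedge S+L_4g\wedge S^2+L_5S\wedge S^2+L_6S^2\wedge S^2$ for some smooth functions $L_j$. A symmetric $(0,2)$-tensor $E$ with endomorphism $\mathcal E$ ($g(\mathcal EX,Y)=E(X,Y)$) is Riemann compatible if $R(\mathcal EX_1,X,X_2,X_3)+R(\mathcal EX_2,X,X_3,X_1)+R(\mathcal EX_3,X,X_1,X_2)=0$ for all vector fields; conformal (Weyl), concircular and conharmonic compatibility are defined identically with $R$ replaced by $C$, $W$, $K$ respectively. *)

theory Defs
  imports "HOL-Analysis.Analysis"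
begin

text \<open>Points and tangent vectors are elements of real^'n (coordinate components);
  a metric is given by its component matrix field G p $ i $ j = g_p(d_i, d_j).
  A (0,k)-tensor at a point is a function of a list of k tangent vectors.\<close>

type_synonym 'n metric = "real^'n \<Rightarrow> real^'n^'n"
type_synonym 'n tensor = "(real^'n) list \<Rightarrow> real"

definition ev :: "'n::finite \<Rightarrow> real^'n" where
  "ev i = axis i 1"

definition pd :: "(real^'n::finite \<Rightarrow> real) \<Rightarrow> 'n \<Rightarrow> real^'n \<Rightarrow> real" where
  "pd f i p = deriv (\<lambda>s. f (p + s *\<^sub>R ev i)) 0"

fun pdl :: "'n::finite list \<Rightarrow> (real^'n \<Rightarrow> real) \<Rightarrow> real^'n \<Rightarrow> real" where
  "pdl [] f = f"
| "pdl (i # is) f = pd (pdl is f) i"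

definition smooth_fun :: "(real^'n::finite) set \<Rightarrow> (real^'n \<Rightarrow> real) \<Rightarrow> bool" where
  "smooth_fun S f \<longleftrightarrow>
     (\<forall>is. continuous_on S (pdl is f) \<and>
        (\<forall>i. \<forall>p\<in>S. (\<lambda>s. pdl is f (p + s *\<^sub>R ev i)) differentiable (at 0)))"

definition smooth_field :: "(real^'n::finite) set \<Rightarrow> (real^'n \<Rightarrow> real^'n) \<Rightarrow> bool" where
  "smooth_field S V \<longleftrightarrow> (\<forall>i. smooth_fun S (\<lambda>p. V p $ i))"

definition smooth_tensor2 :: "(real^'n::finite) set \<Rightarrow> (real^'n \<Rightarrow> real^'n^'n) \<Rightarrow> bool" where
  "smooth_tensor2 S E \<longleftrightarrow> (\<forall>i j. smooth_fun S (\<lambda>p. E p $ i $ j))"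

definition gform :: "'n::finite metric \<Rightarrow> real^'n \<Rightarrow> real^'n \<Rightarrow> real^'n \<Rightarrow> real" where
  "gform G p X Y = (\<Sum>i\<in>UNIV. \<Sum>j\<in>UNIV. G p $ i $ j * X $ i * Y $ j)"

definition ginv :: "'n::finite metric \<Rightarrow> real^'n \<Rightarrow> real^'n^'n" where
  "ginv G p = matrix_inv (G p)"

text \<open>Christoffel symbols: christ G p k i j = Gamma^k_{ij}, nabla_{d_i} d_j = sum_k Gamma^k_{ij} d_k.\<close>
definition christ :: "'n::finite metric \<Rightarrow> real^'n \<Rightarrow> 'n \<Rightarrow> 'n \<Rightarrow> 'n \<Rightarrow> real" where
  "christ G p k i j = (1/2) * (\<Sum>l\<in>UNIV. ginv G p $ k $ l *
      (pd (\<lambda>q. G q $ j $ l) i p + pd (\<lambda>q. G q $ i $ l) j p - pd (\<lambda>q. G q $ i $ j) l p))"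

text \<open>rcomp G p i j k l = l-th component of R(d_i,d_j)d_k, with
  R(X,Y) = [nabla_X,nabla_Y] - nabla_[X,Y].\<close>
definition rcomp :: "'n::finite metric \<Rightarrow> real^'n \<Rightarrow> 'n \<Rightarrow> 'n \<Rightarrow> 'n \<Rightarrow> 'n \<Rightarrow> real" where
  "rcomp G p i j k l =
     pd (\<lambda>q. christ G q l j k) i p - pd (\<lambda>q. christ G q l i k) j p
     + (\<Sum>m\<in>UNIV. christ G p m j k * christ G p l i m - christ G p m i k * christ G p l j m)"

definition curv :: "'n::finite metric \<Rightarrow> real^'n \<Rightarrow> real^'n \<Rightarrow> real^'n \<Rightarrow> real^'n \<Rightarrow> real^'n" where
  "curv G p X Y Z = (\<chi> l. \<Sum>i\<in>UNIV. \<Sum>j\<in>UNIV. \<Sum>k\<in>UNIV. X $ i * Y $ j * Z $ k * rcomp G p i j k l)"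

definition Rtens :: "'n::finite metric \<Rightarrow> real^'n \<Rightarrow> real^'n \<Rightarrow> real^'n \<Rightarrow> real^'n \<Rightarrow> real^'n \<Rightarrow> real" where
  "Rtens G p X1 X2 X3 X4 = gform G p (curv G p X1 X2 X3) X4"

definition ricci :: "'n::finite metric \<Rightarrow> real^'n \<Rightarrow> real^'n \<Rightarrow> real^'n \<Rightarrow> real" where
  "ricci G p X Y = (\<Sum>l\<in>UNIV. curv G p (ev l) X Y $ l)"

definition scal :: "'n::finite metric \<Rightarrow> real^'n \<Rightarrow> real" where
  "scal G p = (\<Sum>i\<in>UNIV. \<Sum>j\<in>UNIV. ginv G p $ i $ j * ricci G p (ev i) (ev j))"

text \<open>Ricci operator: g(X, ricop Y) = S(X,Y).\<close>
definition ricop :: "'n::finite metric \<Rightarrow> real^'n \<Rightarrow> real^'n \<Rightarrow> real^'n" where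
  "ricop G p Y = ginv G p *v (\<chi> i. ricci G p (ev i) Y)"

definition ricci2 :: "'n::finite metric \<Rightarrow> real^'n \<Rightarrow> real^'n \<Rightarrow> real^'n \<Rightarrow> real" where
  "ricci2 G p X Y = ricci G p X (ricop G p Y)"

definition ricci3 :: "'n::finite metric \<Rightarrow> real^'n \<Rightarrow> real^'n \<Rightarrow> real^'n \<Rightarrow> real" where
  "ricci3 G p X Y = ricci G p X (ricop G p (ricop G p Y))"

definition wedge :: "(real^'n \<Rightarrow> real^'n \<Rightarrow> real) \<Rightarrow> real^'n \<Rightarrow> real^'n \<Rightarrow> real^'n \<Rightarrow> real^'n" where
  "wedge A X Y Z = A Y Z *\<^sub>R X - A X Z *\<^sub>R Y"

definition dimr :: "'n::finite itself \<Rightarrow> real" where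
  "dimr _ = real CARD('n)"

definition weylop :: "'n::finite metric \<Rightarrow> real^'n \<Rightarrow> real^'n \<Rightarrow> real^'n \<Rightarrow> real^'n \<Rightarrow> real^'n" where
  "weylop G p X Y Z = curv G p X Y Z - (1 / (dimr TYPE('n) - 2)) *\<^sub>R
     (wedge (gform G p) X (ricop G p Y) Z + wedge (gform G p) (ricop G p X) Y Z
      - (scal G p / (dimr TYPE('n) - 1)) *\<^sub>R wedge (gform G p) X Y Z)"

definition concop :: "'n::finite metric \<Rightarrow> real^'n \<Rightarrow> real^'n \<Rightarrow> real^'n \<Rightarrow> real^'n \<Rightarrow> real^'n" where
  "concop G p X Y Z = curv G p X Y Z
     - (scal G p / (dimr TYPE('n) * (dimr TYPE('n) - 1))) *\<^sub>R wedge (gform G p) X Y Z"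

definition conhop :: "'n::finite metric \<Rightarrow> real^'n \<Rightarrow> real^'n \<Rightarrow> real^'n \<Rightarrow> real^'n \<Rightarrow> real^'n" where
  "conhop G p X Y Z = curv G p X Y Z - (1 / (dimr TYPE('n) - 2)) *\<^sub>R
     (wedge (gform G p) X (ricop G p Y) Z + wedge (gform G p) (ricop G p X) Y Z)"

definition Ctens :: "'n::finite metric \<Rightarrow> real^'n \<Rightarrow> real^'n \<Rightarrow> real^'n \<Rightarrow> real^'n \<Rightarrow> real^'n \<Rightarrow> real" where
  "Ctens G p X1 X2 X3 X4 = gform G p (weylop G p X1 X2 X3) X4"

definition Wtens :: "'n::finite metric \<Rightarrow> real^'n \<Rightarrow> real^'n \<Rightarrow> real^'n \<Rightarrow> real^'n \<Rightarrow> real^'n \<Rightarrow> real" where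
  "Wtens G p X1 X2 X3 X4 = gform G p (concop G p X1 X2 X3) X4"

definition Ktens :: "'n::finite metric \<Rightarrow> real^'n \<Rightarrow> real^'n \<Rightarrow> real^'n \<Rightarrow> real^'n \<Rightarrow> real^'n \<Rightarrow> real" where
  "Ktens G p X1 X2 X3 X4 = gform G p (conhop G p X1 X2 X3) X4"

definition endo_act :: "(real^'n \<Rightarrow> real^'n) \<Rightarrow> 'n tensor \<Rightarrow> 'n tensor" where
  "endo_act H T xs = - (\<Sum>i<length xs. T (xs[i := H (xs ! i)]))"

definition tens4 :: "(real^'n \<Rightarrow> real^'n \<Rightarrow> real^'n \<Rightarrow> real^'n \<Rightarrow> real) \<Rightarrow> 'n tensor" where
  "tens4 f xs = f (xs ! 0) (xs ! 1) (xs ! 2) (xs ! 3)"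

definition kn :: "(real^'n \<Rightarrow> real^'n \<Rightarrow> real) \<Rightarrow> (real^'n \<Rightarrow> real^'n \<Rightarrow> real)
    \<Rightarrow> real^'n \<Rightarrow> real^'n \<Rightarrow> real^'n \<Rightarrow> real^'n \<Rightarrow> real" where
  "kn A E X1 X2 X Y = A X1 Y * E X2 X + A X2 X * E X1 Y - A X1 X * E X2 Y - A X2 Y * E X1 X"

definition nablaS_comp :: "'n::finite metric \<Rightarrow> real^'n \<Rightarrow> 'n \<Rightarrow> 'n \<Rightarrow> 'n \<Rightarrow> real" where
  "nablaS_comp G p i j k =
     pd (\<lambda>q. ricci G q (ev j) (ev k)) i p
     - (\<Sum>m\<in>UNIV. christ G p m i j * ricci G p (ev m) (ev k))
     - (\<Sum>m\<in>UNIV. christ G p m i k * ricci G p (ev j) (ev m))"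

definition nablaS :: "'n::finite metric \<Rightarrow> real^'n \<Rightarrow> real^'n \<Rightarrow> real^'n \<Rightarrow> real^'n \<Rightarrow> real" where
  "nablaS G p X1 X2 X3 = (\<Sum>i\<in>UNIV. \<Sum>j\<in>UNIV. \<Sum>k\<in>UNIV. X1 $ i * X2 $ j * X3 $ k * nablaS_comp G p i j k)"

definition cyclic_parallel_ricci :: "'n::finite metric \<Rightarrow> (real^'n) set \<Rightarrow> bool" where
  "cyclic_parallel_ricci G M \<longleftrightarrow>
     (\<forall>p\<in>M. \<forall>X1 X2 X3. nablaS G p X1 X2 X3 + nablaS G p X2 X3 X1 + nablaS G p X3 X1 X2 = 0)"

definition k_quasi_einstein :: "nat \<Rightarrow> 'n::finite metric \<Rightarrow> (real^'n) set \<Rightarrow> bool" where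
  "k_quasi_einstein k G M \<longleftrightarrow>
     (\<exists>\<alpha>. smooth_fun M \<alpha> \<and>
        (\<forall>p\<in>M. rank (\<chi> i j. ricci G p (ev i) (ev j) - \<alpha> p * G p $ i $ j) = k))"

definition ein3 :: "'n::finite metric \<Rightarrow> (real^'n) set \<Rightarrow> bool" where
  "ein3 G M \<longleftrightarrow>
     (\<exists>a3 a4 a5. smooth_fun M a3 \<and> smooth_fun M a4 \<and> smooth_fun M a5 \<and>
        (\<forall>p\<in>M. \<forall>X Y. ricci3 G p X Y + a3 p * ricci2 G p X Y + a4 p * ricci G p X Y
                        + a5 p * gform G p X Y = 0))"

text \<open>The set U: points where S - nu1 g - nu2 xi\<otimes>xi \<noteq> 0 for all scalars nu1, nu2 and covectors xi
  (a covector is given by its components; xi(X) = xi \<bullet> X).\<close>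
definition Uset :: "'n::finite metric \<Rightarrow> (real^'n) set \<Rightarrow> (real^'n) set" where
  "Uset G M = {p\<in>M. \<forall>\<nu>1 \<nu>2 (\<xi>::real^'n). \<exists>X Y.
      ricci G p X Y - \<nu>1 * gform G p X Y - \<nu>2 * ((\<xi> \<bullet> X) * (\<xi> \<bullet> Y)) \<noteq> 0}"

text \<open>1-forms Pi, Phi given by component fields; their associated vector fields are ginv *v Pi.\<close>
definition gqe_chaki :: "'n::finite metric \<Rightarrow> (real^'n) set \<Rightarrow> bool" where
  "gqe_chaki G M \<longleftrightarrow> (let U = Uset G M in
     (\<exists>\<alpha> \<beta> \<gamma> \<pi> \<phi>. smooth_fun U \<alpha> \<and> smooth_fun U \<beta> \<and> smooth_fun U \<gamma> \<and>
        smooth_field U \<pi> \<and> smooth_field U \<phi> \<and>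
        (\<forall>p\<in>U. gform G p (ginv G p *v \<pi> p) (ginv G p *v \<phi> p) = 0 \<and>
           (\<forall>X Y. ricci G p X Y = \<alpha> p * gform G p X Y + \<beta> p * ((\<pi> p \<bullet> X) * (\<pi> p \<bullet> Y))
                 + \<gamma> p * ((\<pi> p \<bullet> X) * (\<phi> p \<bullet> Y) + (\<phi> p \<bullet> X) * (\<pi> p \<bullet> Y))))))"

definition gqe_de_ghosh :: "'n::finite metric \<Rightarrow> (real^'n) set \<Rightarrow> bool" where
  "gqe_de_ghosh G M \<longleftrightarrow> (let U = Uset G M in
     (\<exists>\<alpha> \<beta> \<gamma> \<pi> \<phi>. smooth_fun U \<alpha> \<and> smooth_fun U \<beta> \<and> smooth_fun U \<gamma> \<and>
        smooth_field U \<pi> \<and> smooth_field U \<phi> \<and>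
        (\<forall>p\<in>U. gform G p (ginv G p *v \<pi> p) (ginv G p *v \<phi> p) = 0 \<and>
           (\<forall>X Y. ricci G p X Y = \<alpha> p * gform G p X Y + \<beta> p * ((\<pi> p \<bullet> X) * (\<pi> p \<bullet> Y))
                 + \<gamma> p * ((\<phi> p \<bullet> X) * (\<phi> p \<bullet> Y))))))"

definition pseudo_qe :: "'n::finite metric \<Rightarrow> (real^'n) set \<Rightarrow> bool" where
  "pseudo_qe G M \<longleftrightarrow> (let U = Uset G M in
     (\<exists>\<alpha> \<beta> \<gamma> \<pi> E. smooth_fun U \<alpha> \<and> smooth_fun U \<beta> \<and> smooth_fun U \<gamma> \<and>
        smooth_field U \<pi> \<and> smooth_tensor2 U E \<and>
        (\<forall>p\<in>U. (\<forall>i j. E p $ i $ j = E p $ j $ i) \<and>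
           (\<Sum>i\<in>UNIV. \<Sum>j\<in>UNIV. ginv G p $ i $ j * E p $ i $ j) = 0 \<and>
           (\<forall>X. (\<Sum>i\<in>UNIV. \<Sum>j\<in>UNIV. E p $ i $ j * X $ i * (ginv G p *v \<pi> p) $ j) = 0) \<and>
           (\<forall>X Y. ricci G p X Y = \<alpha> p * gform G p X Y + \<beta> p * ((\<pi> p \<bullet> X) * (\<pi> p \<bullet> Y))
                 + \<gamma> p * (\<Sum>i\<in>UNIV. \<Sum>j\<in>UNIV. E p $ i $ j * X $ i * Y $ j)))))"

definition special_ricci_gen_pseudosym :: "'n::finite metric \<Rightarrow> (real^'n) set \<Rightarrow> bool" where
  "special_ricci_gen_pseudosym G M \<longleftrightarrow>
     (\<forall>p\<in>M. \<forall>xs X Y. length xs = 4 \<longrightarrow>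
        endo_act (curv G p X Y) (tens4 (Rtens G p)) xs
        = endo_act (wedge (ricci G p) X Y) (tens4 (Rtens G p)) xs)"

definition weyl_pseudosym :: "'n::finite metric \<Rightarrow> (real^'n) set \<Rightarrow> bool" where
  "weyl_pseudosym G M \<longleftrightarrow>
     (\<exists>L. smooth_fun M L \<and>
       (\<forall>p\<in>M. \<forall>xs X Y. length xs = 4 \<longrightarrow>
          endo_act (weylop G p X Y) (tens4 (Ctens G p)) xs
          = L p * endo_act (wedge (gform G p) X Y) (tens4 (Ctens G p)) xs))"

definition gen_roter :: "'n::finite metric \<Rightarrow> (real^'n) set \<Rightarrow> bool" where
  "gen_roter G M \<longleftrightarrow>
     (\<exists>L1 L2 L3 L4 L5 L6. smooth_fun M L1 \<and> smooth_fun M L2 \<and> smooth_fun M L3 \<and>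
        smooth_fun M L4 \<and> smooth_fun M L5 \<and> smooth_fun M L6 \<and>
       (\<forall>p\<in>M. \<forall>X1 X2 X3 X4. Rtens G p X1 X2 X3 X4 =
            L1 p * kn (gform G p) (gform G p) X1 X2 X3 X4
          + L2 p * kn (gform G p) (ricci G p) X1 X2 X3 X4
          + L3 p * kn (ricci G p) (ricci G p) X1 X2 X3 X4
          + L4 p * kn (gform G p) (ricci2 G p) X1 X2 X3 X4
          + L5 p * kn (ricci G p) (ricci2 G p) X1 X2 X3 X4
          + L6 p * kn (ricci2 G p) (ricci2 G p) X1 X2 X3 X4))"

definition compatible :: "(real^'n \<Rightarrow> real^'n \<Rightarrow> real^'n \<Rightarrow> real^'n \<Rightarrow> real^'n \<Rightarrow> real)
    \<Rightarrow> (real^'n \<Rightarrow> real^'n \<Rightarrow> real^'n) \<Rightarrow> (real^'n) set \<Rightarrow> bool" where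
  "compatible T Eop M \<longleftrightarrow>
     (\<forall>p\<in>M. \<forall>X1 X2 X3 X. T p (Eop p X1) X X2 X3 + T p (Eop p X2) X X3 X1 + T p (Eop p X3) X X1 X2 = 0)"

section \<open>The Som-Raychaudhuri metric, coordinates (t,phi,r,z) = indices (1,2,3,4)\<close>

definition som_ray :: "real \<Rightarrow> 4 metric" where
  "som_ray a p = (let r = p $ 3 in
     \<chi> i j. if i = 1 \<and> j = 1 then 1
            else if (i = 1 \<and> j = 2) \<or> (i = 2 \<and> j = 1) then a * r^2
            else if i = 2 \<and> j = 2 then a^2 * r^4 - r^2
            else if (i = 3 \<and> j = 3) \<or> (i = 4 \<and> j = 4) then -1
            else 0)"

definition som_ray_domain :: "(real^4) set" where
  "som_ray_domain = {p. p $ 3 > 0}"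

end

theory Submission
  imports Defs "HOL-Computational_Algebra.Polynomial"
begin


lemma matrix_inv_unique:
  fixes A B :: "real^'n^'n"
  assumes "A ** B = mat 1" "B ** A = mat 1"
  shows "matrix_inv A = B"
proof -
  have ex: "\<exists>A'. A ** A' = mat 1 \<and> A' ** A = mat 1" using assms by blast
  define C where "C = matrix_inv A"
  have C: "A ** C = mat 1 \<and> C ** A = mat 1"
    unfolding C_def matrix_inv_def using someI_ex[OF ex] by blast
  have "C = C ** (A ** B)" using assms by (simp add: matrix_mul_rid)
  also have "\<dots> = (C ** A) ** B" by (simp add: matrix_mul_assoc)
  also have "\<dots> = B" using C by (simp add: matrix_mul_lid)
  finally show ?thesis unfolding C_def .
qed

definition GI :: "real \<Rightarrow> real \<Rightarrow> real^4^4" where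
  "GI a r = (\<chi> i j. if i = 1 \<and> j = 1 then 1 - a^2 * r^2
            else if (i = 1 \<and> j = 2) \<or> (i = 2 \<and> j = 1) then a
            else if i = 2 \<and> j = 2 then - 1 / r^2
            else if (i = 3 \<and> j = 3) \<or> (i = 4 \<and> j = 4) then -1
            else 0)"

lemma ginv_som:
  assumes "p$3 \<noteq> 0"
  shows "ginv (som_ray a) p = GI a (p$3)"
  unfolding ginv_def
proof (rule matrix_inv_unique)
  show "som_ray a p ** GI a (p $ 3) = mat 1"
    using assms
    by (simp add: vec_eq_iff forall_4 matrix_matrix_mult_def sum_4 mat_def som_ray_def GI_def Let_def
        field_simps eval_nat_numeral)
  show "GI a (p $ 3) ** som_ray a p = mat 1"
    using assms
    by (simp add: vec_eq_iff forall_4 matrix_matrix_mult_def sum_4 mat_def som_ray_def GI_def Let_def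
        field_simps eval_nat_numeral)
qed

lemma ev3: "((p::real^4) + s *\<^sub>R ev i) $ 3 = p $ 3 + (if i = 3 then s else 0)"
  by (simp add: ev_def axis_def)

lemma ev_nth[simp]: "ev i $ j = (if j = i then 1 else 0)"
  by (simp add: ev_def axis_def)

lemma pd_r:
  fixes p :: "real^4" and f :: "real^4 \<Rightarrow> real"
  assumes p: "p$3 > 0" and f: "\<And>q. q$3 > 0 \<Longrightarrow> f q = h (q$3)"
    and d: "(h has_real_derivative h') (at (p$3))"
  shows "pd f i p = (if i = 3 then h' else 0)"
proof (cases "i = 3")
  case True
  have d1: "(h has_real_derivative h') (at (p$3 + 0))" using d by simp
  have d0: "((\<lambda>s. p$3 + s) has_real_derivative 1) (at 0)"
    by (auto intro!: derivative_eq_intros)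
  have d2: "((\<lambda>s. h (p$3 + s)) has_real_derivative h') (at 0)"
    using DERIV_chain2[OF d1 d0] by simp
  have "((\<lambda>s. f (p + s *\<^sub>R ev i)) has_real_derivative h') (at 0)"
  proof (rule has_field_derivative_transform_within_open[OF d2, of "{s. p$3 + s > 0}"])
    show "open {s. p $ 3 + s > 0}" by (auto intro!: open_Collect_less continuous_intros)
    show "0 \<in> {s. p $ 3 + s > 0}" using p by simp
    fix s assume "s \<in> {s. p $ 3 + s > 0}"
    then show "h (p $ 3 + s) = f (p + s *\<^sub>R ev i)" using f[of "p + s *\<^sub>R ev i"] True by (simp add: ev3)
  qed
  then show ?thesis unfolding pd_def using True by (simp add: DERIV_imp_deriv)
next
  case False
  have "(\<lambda>s. f (p + s *\<^sub>R ev i)) = (\<lambda>s. h (p$3))"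
    using f False p by (auto simp: ev3)
  then show ?thesis unfolding pd_def using False by simp
qed


definition gfun :: "real \<Rightarrow> 4 \<Rightarrow> 4 \<Rightarrow> real \<Rightarrow> real" where
  "gfun a j l r = (if j = 1 \<and> l = 1 then ((1))
     else if j = 1 \<and> l = 2 then ((a * r^2))
     else if j = 2 \<and> l = 1 then ((a * r^2))
     else if j = 2 \<and> l = 2 then ((-1 * r^2) + (a^2 * r^4))
     else if j = 3 \<and> l = 3 then ((-1))
     else if j = 4 \<and> l = 4 then ((-1))
     else 0)"
definition gd :: "real \<Rightarrow> 4 \<Rightarrow> 4 \<Rightarrow> real \<Rightarrow> real" where
  "gd a j l r = (if j = 1 \<and> l = 2 then ((2 * a * r))
     else if j = 2 \<and> l = 1 then ((2 * a * r))
     else if j = 2 \<and> l = 2 then ((-2 * r) + (4 * a^2 * r^3))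
     else 0)"
definition cf :: "real \<Rightarrow> 4 \<Rightarrow> 4 \<Rightarrow> 4 \<Rightarrow> real \<Rightarrow> real" where
  "cf a k i j r = (if k = 1 \<and> i = 1 \<and> j = 3 then ((a^2 * r))
     else if k = 1 \<and> i = 2 \<and> j = 3 then ((a^3 * r^3))
     else if k = 1 \<and> i = 3 \<and> j = 1 then ((a^2 * r))
     else if k = 1 \<and> i = 3 \<and> j = 2 then ((a^3 * r^3))
     else if k = 2 \<and> i = 1 \<and> j = 3 then ((-1 * a / r))
     else if k = 2 \<and> i = 2 \<and> j = 3 then ((1 / r) + (-1 * a^2 * r))
     else if k = 2 \<and> i = 3 \<and> j = 1 then ((-1 * a / r))
     else if k = 2 \<and> i = 3 \<and> j = 2 then ((1 / r) + (-1 * a^2 * r))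
     else if k = 3 \<and> i = 1 \<and> j = 2 then ((a * r))
     else if k = 3 \<and> i = 2 \<and> j = 1 then ((a * r))
     else if k = 3 \<and> i = 2 \<and> j = 2 then ((-1 * r) + (2 * a^2 * r^3))
     else 0)"
definition cfd :: "real \<Rightarrow> 4 \<Rightarrow> 4 \<Rightarrow> 4 \<Rightarrow> real \<Rightarrow> real" where
  "cfd a k i j r = (if k = 1 \<and> i = 1 \<and> j = 3 then ((a^2))
     else if k = 1 \<and> i = 2 \<and> j = 3 then ((3 * a^3 * r^2))
     else if k = 1 \<and> i = 3 \<and> j = 1 then ((a^2))
     else if k = 1 \<and> i = 3 \<and> j = 2 then ((3 * a^3 * r^2))
     else if k = 2 \<and> i = 1 \<and> j = 3 then ((a / r^2))
     else if k = 2 \<and> i = 2 \<and> j = 3 then ((-1 / r^2) + (-1 * a^2))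
     else if k = 2 \<and> i = 3 \<and> j = 1 then ((a / r^2))
     else if k = 2 \<and> i = 3 \<and> j = 2 then ((-1 / r^2) + (-1 * a^2))
     else if k = 3 \<and> i = 1 \<and> j = 2 then ((a))
     else if k = 3 \<and> i = 2 \<and> j = 1 then ((a))
     else if k = 3 \<and> i = 2 \<and> j = 2 then ((-1) + (6 * a^2 * r^2))
     else 0)"
definition rcf :: "real \<Rightarrow> 4 \<Rightarrow> 4 \<Rightarrow> 4 \<Rightarrow> 4 \<Rightarrow> real \<Rightarrow> real" where
  "rcf a i j k l r = (if i = 1 \<and> j = 2 \<and> k = 1 \<and> l = 1 then ((a^3 * r^2))
     else if i = 1 \<and> j = 2 \<and> k = 1 \<and> l = 2 then ((-1 * a^2))
     else if i = 1 \<and> j = 2 \<and> k = 2 \<and> l = 1 then ((-1 * a^2 * r^2) + (a^4 * r^4))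
     else if i = 1 \<and> j = 2 \<and> k = 2 \<and> l = 2 then ((-1 * a^3 * r^2))
     else if i = 1 \<and> j = 3 \<and> k = 1 \<and> l = 3 then ((-1 * a^2))
     else if i = 1 \<and> j = 3 \<and> k = 2 \<and> l = 3 then ((-1 * a^3 * r^2))
     else if i = 1 \<and> j = 3 \<and> k = 3 \<and> l = 1 then ((-1 * a^2))
     else if i = 2 \<and> j = 1 \<and> k = 1 \<and> l = 1 then ((-1 * a^3 * r^2))
     else if i = 2 \<and> j = 1 \<and> k = 1 \<and> l = 2 then ((a^2))
     else if i = 2 \<and> j = 1 \<and> k = 2 \<and> l = 1 then ((a^2 * r^2) + (-1 * a^4 * r^4))
     else if i = 2 \<and> j = 1 \<and> k = 2 \<and> l = 2 then ((a^3 * r^2))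
     else if i = 2 \<and> j = 3 \<and> k = 1 \<and> l = 3 then ((-1 * a^3 * r^2))
     else if i = 2 \<and> j = 3 \<and> k = 2 \<and> l = 3 then ((-3 * a^2 * r^2) + (-1 * a^4 * r^4))
     else if i = 2 \<and> j = 3 \<and> k = 3 \<and> l = 1 then ((-4 * a^3 * r^2))
     else if i = 2 \<and> j = 3 \<and> k = 3 \<and> l = 2 then ((3 * a^2))
     else if i = 3 \<and> j = 1 \<and> k = 1 \<and> l = 3 then ((a^2))
     else if i = 3 \<and> j = 1 \<and> k = 2 \<and> l = 3 then ((a^3 * r^2))
     else if i = 3 \<and> j = 1 \<and> k = 3 \<and> l = 1 then ((a^2))
     else if i = 3 \<and> j = 2 \<and> k = 1 \<and> l = 3 then ((a^3 * r^2))
     else if i = 3 \<and> j = 2 \<and> k = 2 \<and> l = 3 then ((3 * a^2 * r^2) + (a^4 * r^4))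
     else if i = 3 \<and> j = 2 \<and> k = 3 \<and> l = 1 then ((4 * a^3 * r^2))
     else if i = 3 \<and> j = 2 \<and> k = 3 \<and> l = 2 then ((-3 * a^2))
     else 0)"
definition ricc :: "real \<Rightarrow> 4 \<Rightarrow> 4 \<Rightarrow> real \<Rightarrow> real" where
  "ricc a j k r = (if j = 1 \<and> k = 1 then ((2 * a^2))
     else if j = 1 \<and> k = 2 then ((2 * a^3 * r^2))
     else if j = 2 \<and> k = 1 then ((2 * a^3 * r^2))
     else if j = 2 \<and> k = 2 then ((2 * a^2 * r^2) + (2 * a^4 * r^4))
     else if j = 3 \<and> k = 3 then ((2 * a^2))
     else 0)"
definition ricd :: "real \<Rightarrow> 4 \<Rightarrow> 4 \<Rightarrow> real \<Rightarrow> real" where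
  "ricd a j k r = (if j = 1 \<and> k = 2 then ((4 * a^3 * r))
     else if j = 2 \<and> k = 1 then ((4 * a^3 * r))
     else if j = 2 \<and> k = 2 then ((4 * a^2 * r) + (8 * a^4 * r^3))
     else 0)"

lemma som_gfun: "som_ray a q $ j $ l = gfun a j l (q$3)"
  using exhaust_4[of j] exhaust_4[of l] by (auto simp: som_ray_def gfun_def Let_def)

lemma gfun_deriv: "(gfun a j l has_real_derivative gd a j l r) (at r)"
  using exhaust_4[of j] exhaust_4[of l]
  by (auto simp: gfun_def[abs_def] gd_def intro!: derivative_eq_intros)

lemma pd_G:
  assumes "p$3 > 0"
  shows "pd (\<lambda>q. som_ray a q $ j $ l) i p = (if i = 3 then gd a j l (p$3) else 0)"
  by (rule pd_r[OF assms _ gfun_deriv]) (simp add: som_gfun)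

lemma christ_eq:
  assumes "p$3 > 0"
  shows "christ (som_ray a) p k i j = cf a k i j (p$3)"
  using exhaust_4[of k] exhaust_4[of i] exhaust_4[of j] assms
  by (auto simp: christ_def ginv_som pd_G sum_4 GI_def gd_def cf_def field_simps eval_nat_numeral)

lemma cf_deriv_all:
  assumes "r > 0"
  shows "\<forall>k i j. (cf a k i j has_real_derivative cfd a k i j r) (at r)"
  unfolding forall_4
  apply (intro conjI)
  apply (simp_all add: cf_def[abs_def] cfd_def)
  using assms apply (auto intro!: derivative_eq_intros simp: power2_eq_square)
  done

lemma cf_deriv:
  assumes "r > 0"
  shows "(cf a k i j has_real_derivative cfd a k i j r) (at r)"
  using cf_deriv_all[OF assms] by blast

lemma pd_christ:
  assumes "p$3 > 0"
  shows "pd (\<lambda>q. christ (som_ray a) q l j k) i p = (if i = 3 then cfd a l j k (p$3) else 0)"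
  by (rule pd_r[OF assms _ cf_deriv[OF assms]]) (simp add: christ_eq)

lemma rcomp_all:
  assumes "p$3 > 0"
  shows "\<forall>i j k l. rcomp (som_ray a) p i j k l = rcf a i j k l (p$3)"
  unfolding forall_4
  apply (intro conjI)
  apply (simp_all add: rcomp_def pd_christ[OF assms] christ_eq[OF assms] sum_4)
  apply (simp_all add: cf_def cfd_def rcf_def)
  using assms apply (simp_all add: field_simps eval_nat_numeral)
  done

lemma rcomp_eq:
  assumes "p$3 > 0"
  shows "rcomp (som_ray a) p i j k l = rcf a i j k l (p$3)"
  using rcomp_all[OF assms] by blast


definition nsf :: "real \<Rightarrow> 4 \<Rightarrow> 4 \<Rightarrow> 4 \<Rightarrow> real \<Rightarrow> real" where
  "nsf a i j k r = (if i = 2 \<and> j = 1 \<and> k = 3 then ((-4 * a^3 * r))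
     else if i = 2 \<and> j = 2 \<and> k = 3 then ((-4 * a^4 * r^3))
     else if i = 2 \<and> j = 3 \<and> k = 1 then ((-4 * a^3 * r))
     else if i = 2 \<and> j = 3 \<and> k = 2 then ((-4 * a^4 * r^3))
     else if i = 3 \<and> j = 1 \<and> k = 2 then ((4 * a^3 * r))
     else if i = 3 \<and> j = 2 \<and> k = 1 then ((4 * a^3 * r))
     else if i = 3 \<and> j = 2 \<and> k = 2 then ((8 * a^4 * r^3))
     else 0)"

definition mk4 :: "real \<Rightarrow> real \<Rightarrow> real \<Rightarrow> real \<Rightarrow> real^4" where
  "mk4 x1 x2 x3 x4 = (\<chi> i. if i = 1 then x1 else if i = 2 then x2 else if i = 3 then x3 else x4)"

lemma mk4_nth[simp]: "mk4 x1 x2 x3 x4 $ 1 = x1" "mk4 x1 x2 x3 x4 $ 2 = x2"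
  "mk4 x1 x2 x3 x4 $ 3 = x3" "mk4 x1 x2 x3 x4 $ 4 = x4"
  by (simp_all add: mk4_def)

definition fr :: "real \<Rightarrow> real \<Rightarrow> real^4 \<Rightarrow> real^4" where
  "fr a r V = mk4 (V$1 + a * r^2 * V$2) (r * V$2) (V$3) (V$4)"

lemma fr_nth[simp]: "fr a r V $ 1 = V$1 + a * r^2 * V$2" "fr a r V $ 2 = r * V$2"
  "fr a r V $ 3 = V$3" "fr a r V $ 4 = V$4"
  by (simp_all add: fr_def)

lemma fr_add: "fr a r (x + y) = fr a r x + fr a r y"
  by (simp add: vec_eq_iff forall_4 algebra_simps)
lemma fr_diff: "fr a r (x - y) = fr a r x - fr a r y"
  by (simp add: vec_eq_iff forall_4 algebra_simps)
lemma fr_scale: "fr a r (c *\<^sub>R x) = c *\<^sub>R fr a r x"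
  by (simp add: vec_eq_iff forall_4 algebra_simps)

definition gF :: "real^4 \<Rightarrow> real^4 \<Rightarrow> real" where
  "gF u v = u$1 * v$1 - u$2 * v$2 - u$3 * v$3 - u$4 * v$4"

definition SF :: "real \<Rightarrow> real^4 \<Rightarrow> real^4 \<Rightarrow> real" where
  "SF a u v = 2 * a^2 * (u$1 * v$1 + u$2 * v$2 + u$3 * v$3)"

definition SopF :: "real \<Rightarrow> real^4 \<Rightarrow> real^4" where
  "SopF a u = mk4 (2 * a^2 * u$1) (- 2 * a^2 * u$2) (- 2 * a^2 * u$3) 0"

definition curvF :: "real \<Rightarrow> real^4 \<Rightarrow> real^4 \<Rightarrow> real^4 \<Rightarrow> real^4" where
  "curvF a u v w = mk4 (a^2 * ((u$2 * v$1 - u$1 * v$2) * w$2 + (u$3 * v$1 - u$1 * v$3) * w$3))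
     (a^2 * (u$2 * v$1 - u$1 * v$2) * w$1 + 3 * a^2 * (u$2 * v$3 - u$3 * v$2) * w$3)
     (a^2 * (u$3 * v$1 - u$1 * v$3) * w$1 + 3 * a^2 * (u$3 * v$2 - u$2 * v$3) * w$2) 0"

lemma gform_fr: "gform (som_ray a) p V W = gF (fr a (p$3) V) (fr a (p$3) W)"
  by (simp add: gform_def gF_def sum_4 som_ray_def Let_def algebra_simps power2_eq_square eval_nat_numeral)

lemma curv_fr:
  assumes "p$3 > 0"
  shows "fr a (p$3) (curv (som_ray a) p X Y Z) = curvF a (fr a (p$3) X) (fr a (p$3) Y) (fr a (p$3) Z)"
  unfolding vec_eq_iff forall_4
  apply (simp add: curv_def sum_4 rcomp_eq[OF assms] curvF_def)
  apply (simp add: rcf_def)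
  apply (simp add: algebra_simps power2_eq_square eval_nat_numeral)
  done

lemma ricci_fr:
  assumes "p$3 > 0"
  shows "ricci (som_ray a) p X Y = SF a (fr a (p$3) X) (fr a (p$3) Y)"
  apply (simp add: ricci_def curv_def sum_4 rcomp_eq[OF assms] SF_def)
  apply (simp add: rcf_def)
  apply (simp add: algebra_simps power2_eq_square eval_nat_numeral)
  done



lemma ricop_fr:
  assumes "p$3 > 0"
  shows "fr a (p$3) (ricop (som_ray a) p Y) = SopF a (fr a (p$3) Y)"
  using assms
  unfolding vec_eq_iff forall_4
  by (simp add: ricop_def ginv_som ricci_fr matrix_vector_mult_def sum_4 GI_def SopF_def SF_def
      field_simps power2_eq_square eval_nat_numeral)

lemma scal_eq:
  assumes "p$3 > 0"
  shows "scal (som_ray a) p = - 2 * a^2"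
  using assms
  by (simp add: scal_def ginv_som ricci_fr sum_4 GI_def SF_def field_simps power2_eq_square eval_nat_numeral)

lemma ricci_ev:
  assumes "q$3 > 0"
  shows "ricci (som_ray a) q (ev j) (ev k) = ricc a j k (q$3)"
  using assms exhaust_4[of j] exhaust_4[of k]
  by (auto simp: ricci_fr SF_def ricc_def algebra_simps power2_eq_square eval_nat_numeral)

lemma ricc_deriv_all:
  "\<forall>j k. (ricc a j k has_real_derivative ricd a j k r) (at r)"
  unfolding forall_4
  apply (intro conjI)
  apply (simp_all add: ricc_def[abs_def] ricd_def)
  apply (auto intro!: derivative_eq_intros simp: power2_eq_square)
  done

lemma pd_ricci:
  assumes "p$3 > 0"
  shows "pd (\<lambda>q. ricci (som_ray a) q (ev j) (ev k)) i p = (if i = 3 then ricd a j k (p$3) else 0)"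
  by (rule pd_r[OF assms _ ricc_deriv_all[rule_format]]) (simp add: ricci_ev)

lemma nablaS_all:
  assumes "p$3 > 0"
  shows "\<forall>i j k. nablaS_comp (som_ray a) p i j k = nsf a i j k (p$3)"
  unfolding forall_4
  apply (intro conjI)
  apply (simp_all add: nablaS_comp_def pd_ricci[OF assms] christ_eq[OF assms] ricci_ev[OF assms] sum_4)
  apply (simp_all add: cf_def ricc_def ricd_def nsf_def)
  using assms apply (simp_all add: field_simps eval_nat_numeral)
  done

lemma cyclic_som: "cyclic_parallel_ricci (som_ray a) som_ray_domain"
  unfolding cyclic_parallel_ricci_def som_ray_domain_def
proof (intro ballI allI)
  fix p X1 X2 X3 assume "p \<in> {p :: real^4. p$3 > 0}"
  then have p: "p$3 > 0" by simp
  have e: "nablaS_comp (som_ray a) p i j k = nsf a i j k (p$3)" for i j k using nablaS_all[OF p] by blast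
  show "nablaS (som_ray a) p X1 X2 X3 + nablaS (som_ray a) p X2 X3 X1 + nablaS (som_ray a) p X3 X1 X2 = 0"
    apply (simp add: nablaS_def e sum_4)
    apply (simp add: nsf_def)
    done
qed



definition wedgeF :: "(real^4 \<Rightarrow> real^4 \<Rightarrow> real) \<Rightarrow> real^4 \<Rightarrow> real^4 \<Rightarrow> real^4 \<Rightarrow> real^4" where
  "wedgeF A u v w = A v w *\<^sub>R u - A u w *\<^sub>R v"

definition RF :: "real \<Rightarrow> real^4 \<Rightarrow> real^4 \<Rightarrow> real^4 \<Rightarrow> real^4 \<Rightarrow> real" where
  "RF a u v w z = gF (curvF a u v w) z"

lemma RR_frame:
  "RF a (curvF a U V u0) u1 u2 u3 + RF a u0 (curvF a U V u1) u2 u3 + RF a u0 u1 (curvF a U V u2) u3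
   + RF a u0 u1 u2 (curvF a U V u3)
 = RF a (wedgeF (SF a) U V u0) u1 u2 u3 + RF a u0 (wedgeF (SF a) U V u1) u2 u3
   + RF a u0 u1 (wedgeF (SF a) U V u2) u3 + RF a u0 u1 u2 (wedgeF (SF a) U V u3)"
  unfolding RF_def gF_def curvF_def wedgeF_def SF_def
  by (simp add: algebra_simps)

definition weylF :: "real \<Rightarrow> real^4 \<Rightarrow> real^4 \<Rightarrow> real^4 \<Rightarrow> real^4" where
  "weylF a u v w = curvF a u v w - (1/2) *\<^sub>R
     (wedgeF gF u (SopF a v) w + wedgeF gF (SopF a u) v w - ((- 2 * a^2) / 3) *\<^sub>R wedgeF gF u v w)"

definition concF :: "real \<Rightarrow> real^4 \<Rightarrow> real^4 \<Rightarrow> real^4 \<Rightarrow> real^4" where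
  "concF a u v w = curvF a u v w - ((- 2 * a^2) / 12) *\<^sub>R wedgeF gF u v w"

definition conhF :: "real \<Rightarrow> real^4 \<Rightarrow> real^4 \<Rightarrow> real^4 \<Rightarrow> real^4" where
  "conhF a u v w = curvF a u v w - (1/2) *\<^sub>R (wedgeF gF u (SopF a v) w + wedgeF gF (SopF a u) v w)"

definition CF :: "real \<Rightarrow> real^4 \<Rightarrow> real^4 \<Rightarrow> real^4 \<Rightarrow> real^4 \<Rightarrow> real" where
  "CF a u v w z = gF (weylF a u v w) z"
definition WF :: "real \<Rightarrow> real^4 \<Rightarrow> real^4 \<Rightarrow> real^4 \<Rightarrow> real^4 \<Rightarrow> real" where
  "WF a u v w z = gF (concF a u v w) z"
definition KF :: "real \<Rightarrow> real^4 \<Rightarrow> real^4 \<Rightarrow> real^4 \<Rightarrow> real^4 \<Rightarrow> real" where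
  "KF a u v w z = gF (conhF a u v w) z"

definition weylE :: "real \<Rightarrow> real^4 \<Rightarrow> real^4 \<Rightarrow> real^4 \<Rightarrow> real^4" where
  "weylE a u v w = (2 * a^2 / 3) *\<^sub>R mk4
     ((u$2 * v$1 - u$1 * v$2) * w$2 + (u$3 * v$1 - u$1 * v$3) * w$3 - 2*(u$4 * v$1 - u$1 * v$4) * w$4)
     ((u$2 * v$1 - u$1 * v$2) * w$1 + 2*(u$2 * v$3 - u$3 * v$2) * w$3 - (u$2 * v$4 - u$4 * v$2) * w$4)
     ((u$3 * v$1 - u$1 * v$3) * w$1 + 2*(u$3 * v$2 - u$2 * v$3) * w$2 - (u$3 * v$4 - u$4 * v$3) * w$4)
     (2*(u$1 * v$4 - u$4 * v$1) * w$1 + (u$2 * v$4 - u$4 * v$2) * w$2 + (u$3 * v$4 - u$4 * v$3) * w$3)"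

lemma weylF_eq: "weylF a u v w = weylE a u v w"
  unfolding weylF_def weylE_def curvF_def wedgeF_def SopF_def gF_def
  by (simp add: vec_eq_iff forall_4 algebra_simps)

lemma CF_eq: "CF a u v w z = gF (weylE a u v w) z"
  by (simp add: CF_def weylF_eq)

definition act4 :: "(real^4 \<Rightarrow> real^4) \<Rightarrow> (real^4 \<Rightarrow> real^4 \<Rightarrow> real^4 \<Rightarrow> real^4 \<Rightarrow> real)
   \<Rightarrow> real^4 \<Rightarrow> real^4 \<Rightarrow> real^4 \<Rightarrow> real^4 \<Rightarrow> real" where
  "act4 H T x0 x1 x2 x3 = T (H x0) x1 x2 x3 + T x0 (H x1) x2 x3 + T x0 x1 (H x2) x3 + T x0 x1 x2 (H x3)"

lemma act4_lin:
  assumes l1: "\<And>x y v w z c d. T (c *\<^sub>R x + d *\<^sub>R y) v w z = c * T x v w z + d * T y v w z"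
    and l2: "\<And>x y v w z c d. T v (c *\<^sub>R x + d *\<^sub>R y) w z = c * T v x w z + d * T v y w z"
    and l3: "\<And>x y v w z c d. T v w (c *\<^sub>R x + d *\<^sub>R y) z = c * T v w x z + d * T v w y z"
    and l4: "\<And>x y v w z c d. T v w z (c *\<^sub>R x + d *\<^sub>R y) = c * T v w z x + d * T v w z y"
  shows "act4 (\<lambda>w. c *\<^sub>R H1 w + d *\<^sub>R H2 w) T x0 x1 x2 x3
       = c * act4 H1 T x0 x1 x2 x3 + d * act4 H2 T x0 x1 x2 x3"
  unfolding act4_def l1 l2 l3 l4 by (simp add: algebra_simps)

lemma CF_l1: "CF a (c *\<^sub>R x + d *\<^sub>R y) v w z = c * CF a x v w z + d * CF a y v w z"
  unfolding CF_eq gF_def weylE_def by (simp add: field_simps)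
lemma CF_l2: "CF a v (c *\<^sub>R x + d *\<^sub>R y) w z = c * CF a v x w z + d * CF a v y w z"
  unfolding CF_eq gF_def weylE_def by (simp add: field_simps)
lemma CF_l3: "CF a v w (c *\<^sub>R x + d *\<^sub>R y) z = c * CF a v w x z + d * CF a v w y z"
  unfolding CF_eq gF_def weylE_def by (simp add: field_simps)
lemma CF_l4: "CF a v w z (c *\<^sub>R x + d *\<^sub>R y) = c * CF a v w z x + d * CF a v w z y"
  unfolding CF_eq gF_def weylE_def by (simp add: field_simps)

lemma weylE_split:
  "weylE a U V w = (2 * a^2 / 3) *\<^sub>R wedgeF gF U V w
     + 1 *\<^sub>R ((2 * a^2 * (U$1 * V$4 - U$4 * V$1)) *\<^sub>R mk4 (w$4) 0 0 (w$1)
     + (2 * a^2 * (U$2 * V$3 - U$3 * V$2)) *\<^sub>R mk4 0 (w$3) (- w$2) 0)"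
  unfolding weylE_def wedgeF_def gF_def
  by (simp add: vec_eq_iff forall_4 field_simps)

lemma weylE_fun:
  "weylE a U V = (\<lambda>w. (2 * a^2 / 3) *\<^sub>R wedgeF gF U V w
     + 1 *\<^sub>R ((2 * a^2 * (U$1 * V$4 - U$4 * V$1)) *\<^sub>R mk4 (w$4) 0 0 (w$1)
     + (2 * a^2 * (U$2 * V$3 - U$3 * V$2)) *\<^sub>R mk4 0 (w$3) (- w$2) 0))"
  by (rule ext) (rule weylE_split)

lemma D14: "act4 (\<lambda>w. mk4 (w$4) 0 0 (w$1)) (CF a) x0 x1 x2 x3 = 0"
  unfolding act4_def CF_eq gF_def weylE_def by (simp add: algebra_simps)
lemma D23: "act4 (\<lambda>w. mk4 0 (w$3) (- w$2) 0) (CF a) x0 x1 x2 x3 = 0"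
  unfolding act4_def CF_eq gF_def weylE_def by (simp add: algebra_simps)

lemma CC_frame:
  "act4 (weylE a U V) (CF a) x0 x1 x2 x3 = (2 * a^2 / 3) * act4 (wedgeF gF U V) (CF a) x0 x1 x2 x3"
proof -
  note L = act4_lin[of "CF a", OF CF_l1 CF_l2 CF_l3 CF_l4]
  have "act4 (weylE a U V) (CF a) x0 x1 x2 x3 =
     act4 (\<lambda>w. (2 * a^2 / 3) *\<^sub>R wedgeF gF U V w
     + 1 *\<^sub>R ((2 * a^2 * (U$1 * V$4 - U$4 * V$1)) *\<^sub>R mk4 (w$4) 0 0 (w$1)
     + (2 * a^2 * (U$2 * V$3 - U$3 * V$2)) *\<^sub>R mk4 0 (w$3) (- w$2) 0)) (CF a) x0 x1 x2 x3"
    by (simp only: weylE_fun)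
  also have "\<dots> = (2 * a^2 / 3) * act4 (wedgeF gF U V) (CF a) x0 x1 x2 x3"
    by (simp only: L D14 D23) simp
  finally show ?thesis .
qed

lemma compR_frame: "RF a (SopF a x1) x x2 x3 + RF a (SopF a x2) x x3 x1 + RF a (SopF a x3) x x1 x2 = 0"
  unfolding RF_def gF_def curvF_def SopF_def by (simp add: algebra_simps)
lemma compC_frame: "CF a (SopF a x1) x x2 x3 + CF a (SopF a x2) x x3 x1 + CF a (SopF a x3) x x1 x2 = 0"
  unfolding CF_def weylF_def wedgeF_def gF_def curvF_def SopF_def by (simp add: algebra_simps)
lemma compW_frame: "WF a (SopF a x1) x x2 x3 + WF a (SopF a x2) x x3 x1 + WF a (SopF a x3) x x1 x2 = 0"
  unfolding WF_def concF_def wedgeF_def gF_def curvF_def SopF_def by (simp add: algebra_simps)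
lemma compK_frame: "KF a (SopF a x1) x x2 x3 + KF a (SopF a x2) x x3 x1 + KF a (SopF a x3) x x1 x2 = 0"
  unfolding KF_def conhF_def wedgeF_def gF_def curvF_def SopF_def by (simp add: algebra_simps)

lemma ein3_frame: "SF a u (SopF a (SopF a v)) + (- 4 * a^4) * SF a u v = 0"
  unfolding SF_def SopF_def by (simp add: algebra_simps)

lemma roter_frame:
  assumes "a \<noteq> 0"
  shows "RF a x1 x2 x3 x4 = (a^2/2) * kn gF gF x1 x2 x3 x4
     + (- 1 / (4 * a^2)) * kn (SF a) (SF a) x1 x2 x3 x4
     + (- 1 / (4 * a^2)) * kn gF (\<lambda>u v. SF a u (SopF a v)) x1 x2 x3 x4"
  using assms unfolding RF_def gF_def curvF_def SopF_def SF_def kn_def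
  by (simp add: field_simps) algebra



lemma Rtens_fr:
  assumes "p$3 > 0"
  shows "Rtens (som_ray a) p X1 X2 X3 X4 = RF a (fr a (p$3) X1) (fr a (p$3) X2) (fr a (p$3) X3) (fr a (p$3) X4)"
  by (simp add: Rtens_def gform_fr curv_fr[OF assms] RF_def)

lemma fr_wedge: "fr a r (wedge A X Y Z) = A Y Z *\<^sub>R fr a r X - A X Z *\<^sub>R fr a r Y"
  by (simp add: wedge_def fr_diff fr_scale)

lemma dimr4: "dimr TYPE(4) = 4" by (simp add: dimr_def)

lemma weylop_fr:
  assumes "p$3 > 0"
  shows "fr a (p$3) (weylop (som_ray a) p X Y Z) = weylF a (fr a (p$3) X) (fr a (p$3) Y) (fr a (p$3) Z)"
  by (simp add: weylop_def dimr4 fr_diff fr_add fr_scale fr_wedge curv_fr[OF assms] ricop_fr[OF assms]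
      gform_fr scal_eq[OF assms] weylF_def wedgeF_def)

lemma concop_fr:
  assumes "p$3 > 0"
  shows "fr a (p$3) (concop (som_ray a) p X Y Z) = concF a (fr a (p$3) X) (fr a (p$3) Y) (fr a (p$3) Z)"
  by (simp add: concop_def dimr4 fr_diff fr_add fr_scale fr_wedge curv_fr[OF assms]
      gform_fr scal_eq[OF assms] concF_def wedgeF_def)

lemma conhop_fr:
  assumes "p$3 > 0"
  shows "fr a (p$3) (conhop (som_ray a) p X Y Z) = conhF a (fr a (p$3) X) (fr a (p$3) Y) (fr a (p$3) Z)"
  by (simp add: conhop_def dimr4 fr_diff fr_add fr_scale fr_wedge curv_fr[OF assms] ricop_fr[OF assms]
      gform_fr conhF_def wedgeF_def)

lemma Ctens_fr:
  assumes "p$3 > 0"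
  shows "Ctens (som_ray a) p X1 X2 X3 X4 = CF a (fr a (p$3) X1) (fr a (p$3) X2) (fr a (p$3) X3) (fr a (p$3) X4)"
  by (simp add: Ctens_def gform_fr weylop_fr[OF assms] CF_def)

lemma Wtens_fr:
  assumes "p$3 > 0"
  shows "Wtens (som_ray a) p X1 X2 X3 X4 = WF a (fr a (p$3) X1) (fr a (p$3) X2) (fr a (p$3) X3) (fr a (p$3) X4)"
  by (simp add: Wtens_def gform_fr concop_fr[OF assms] WF_def)

lemma Ktens_fr:
  assumes "p$3 > 0"
  shows "Ktens (som_ray a) p X1 X2 X3 X4 = KF a (fr a (p$3) X1) (fr a (p$3) X2) (fr a (p$3) X3) (fr a (p$3) X4)"
  by (simp add: Ktens_def gform_fr conhop_fr[OF assms] KF_def)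

lemma endo4: "endo_act H T [x0, x1, x2, x3] =
   - (T [H x0, x1, x2, x3] + T [x0, H x1, x2, x3] + T [x0, x1, H x2, x3] + T [x0, x1, x2, H x3])"
  by (simp add: endo_act_def numeral_eq_Suc lessThan_Suc algebra_simps)

lemma len4: "length xs = 4 \<Longrightarrow> \<exists>x0 x1 x2 x3. xs = [x0, x1, x2, x3]"
  by (auto simp: numeral_eq_Suc length_Suc_conv)

lemma tens4_4: "tens4 f [x0, x1, x2, x3] = f x0 x1 x2 x3"
  by (simp add: tens4_def)

lemma dom_pos: "p \<in> som_ray_domain \<Longrightarrow> p$3 > 0"
  by (simp add: som_ray_domain_def)

lemma srgp_som: "special_ricci_gen_pseudosym (som_ray a) som_ray_domain"
  unfolding special_ricci_gen_pseudosym_def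
proof (intro ballI allI impI)
  fix p xs X Y assume p0: "p \<in> som_ray_domain" and l: "length (xs :: (real^4) list) = 4"
  have p: "p$3 > 0" using dom_pos[OF p0] .
  obtain x0 x1 x2 x3 where xs: "xs = [x0, x1, x2, x3]" using len4[OF l] by blast
  have w: "fr a (p$3) (wedge (ricci (som_ray a) p) X Y Z)
     = wedgeF (SF a) (fr a (p$3) X) (fr a (p$3) Y) (fr a (p$3) Z)" for Z
    by (simp add: fr_wedge ricci_fr[OF p] wedgeF_def)
  show "endo_act (curv (som_ray a) p X Y) (tens4 (Rtens (som_ray a) p)) xs =
        endo_act (wedge (ricci (som_ray a) p) X Y) (tens4 (Rtens (som_ray a) p)) xs"
    unfolding xs endo4 tens4_4 Rtens_fr[OF p] curv_fr[OF p] w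
    using RR_frame by simp
qed

lemma weyl_ps_eq:
  assumes p: "p$3 > 0" and l: "length (xs :: (real^4) list) = 4"
  shows "endo_act (weylop (som_ray a) p X Y) (tens4 (Ctens (som_ray a) p)) xs
    = (2 * a^2 / 3) * endo_act (wedge (gform (som_ray a) p) X Y) (tens4 (Ctens (som_ray a) p)) xs"
proof -
  obtain x0 x1 x2 x3 where xs: "xs = [x0, x1, x2, x3]" using len4[OF l] by blast
  have w: "fr a (p$3) (wedge (gform (som_ray a) p) X Y Z)
     = wedgeF gF (fr a (p$3) X) (fr a (p$3) Y) (fr a (p$3) Z)" for Z
    by (simp add: fr_wedge gform_fr wedgeF_def)
  show ?thesis
    unfolding xs endo4 tens4_4 Ctens_fr[OF p] weylop_fr[OF p] w weylF_eq
    using CC_frame[of a "fr a (p$3) X" "fr a (p$3) Y" "fr a (p$3) x0" "fr a (p$3) x1" "fr a (p$3) x2" "fr a (p$3) x3"]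
    unfolding act4_def by (simp add: algebra_simps)
qed

lemma compat_all:
  "compatible (Rtens (som_ray a)) (ricop (som_ray a)) som_ray_domain
   \<and> compatible (Ctens (som_ray a)) (ricop (som_ray a)) som_ray_domain
   \<and> compatible (Wtens (som_ray a)) (ricop (som_ray a)) som_ray_domain
   \<and> compatible (Ktens (som_ray a)) (ricop (som_ray a)) som_ray_domain"
  unfolding compatible_def
  by (auto dest!: dom_pos simp: Rtens_fr Ctens_fr Wtens_fr Ktens_fr ricop_fr
      compR_frame compC_frame compW_frame compK_frame)

lemma ein3_eq:
  assumes p: "p$3 > 0"
  shows "ricci3 (som_ray a) p X Y + 0 * ricci2 (som_ray a) p X Y + (- 4 * a^4) * ricci (som_ray a) p X Y
     + 0 * gform (som_ray a) p X Y = 0"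
  using ein3_frame by (simp add: ricci3_def ricci_fr[OF p] ricop_fr[OF p])

lemma roter_eq:
  assumes a: "a \<noteq> 0" and p: "p$3 > 0"
  shows "Rtens (som_ray a) p X1 X2 X3 X4 =
            (a^2/2) * kn (gform (som_ray a) p) (gform (som_ray a) p) X1 X2 X3 X4
          + 0 * kn (gform (som_ray a) p) (ricci (som_ray a) p) X1 X2 X3 X4
          + (- 1 / (4 * a^2)) * kn (ricci (som_ray a) p) (ricci (som_ray a) p) X1 X2 X3 X4
          + (- 1 / (4 * a^2)) * kn (gform (som_ray a) p) (ricci2 (som_ray a) p) X1 X2 X3 X4
          + 0 * kn (ricci (som_ray a) p) (ricci2 (som_ray a) p) X1 X2 X3 X4
          + 0 * kn (ricci2 (som_ray a) p) (ricci2 (som_ray a) p) X1 X2 X3 X4"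
proof -
  have k1: "kn (gform (som_ray a) p) (gform (som_ray a) p) X1 X2 X3 X4
      = kn gF gF (fr a (p$3) X1) (fr a (p$3) X2) (fr a (p$3) X3) (fr a (p$3) X4)"
    by (simp add: kn_def gform_fr)
  have k2: "kn (ricci (som_ray a) p) (ricci (som_ray a) p) X1 X2 X3 X4
      = kn (SF a) (SF a) (fr a (p$3) X1) (fr a (p$3) X2) (fr a (p$3) X3) (fr a (p$3) X4)"
    by (simp add: kn_def ricci_fr[OF p])
  have k3: "kn (gform (som_ray a) p) (ricci2 (som_ray a) p) X1 X2 X3 X4
      = kn gF (\<lambda>u v. SF a u (SopF a v)) (fr a (p$3) X1) (fr a (p$3) X2) (fr a (p$3) X3) (fr a (p$3) X4)"
    by (simp add: kn_def gform_fr ricci2_def ricci_fr[OF p] ricop_fr[OF p])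
  show ?thesis unfolding k1 k2 k3 Rtens_fr[OF p] using roter_frame[OF a] by simp
qed



lemma line3: "((p::real^4) + s *\<^sub>R ev i) $ 3 = p$3 + s * ev i $ 3"
  by simp

lemma pd_poly3: "pd (\<lambda>q::real^4. poly P (q$3)) i = (\<lambda>q. if i = 3 then poly (pderiv P) (q$3) else 0)"
proof (rule ext)
  fix q :: "real^4"
  have d: "((\<lambda>s. poly P (q$3 + s * ev i $ 3)) has_real_derivative poly (pderiv P) (q$3 + 0 * ev i $ 3) * ev i $ 3) (at 0)"
    by (rule DERIV_chain2[OF poly_DERIV]) (auto intro!: derivative_eq_intros)
  show "pd (\<lambda>q. poly P (q $ 3)) i q = (if i = 3 then poly (pderiv P) (q $ 3) else 0)"
    unfolding pd_def line3 using DERIV_imp_deriv[OF d] by (simp del: ev_nth) (simp)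
qed

lemma pdl_poly3: "\<exists>Q. pdl is (\<lambda>q::real^4. poly P (q$3)) = (\<lambda>q. poly Q (q$3))"
proof (induction "is")
  case Nil then show ?case by auto
next
  case (Cons i "is")
  then obtain Q where Q: "pdl is (\<lambda>q::real^4. poly P (q$3)) = (\<lambda>q. poly Q (q$3))" by blast
  show ?case
    by (rule exI[of _ "if i = 3 then pderiv Q else 0"]) (simp add: Q pd_poly3)
qed

lemma smooth_poly3: "smooth_fun S (\<lambda>q::real^4. poly P (q$3))"
  unfolding smooth_fun_def
proof (intro allI conjI ballI)
  fix "is" :: "4 list"
  obtain Q where Q: "pdl is (\<lambda>q::real^4. poly P (q$3)) = (\<lambda>q. poly Q (q$3))" using pdl_poly3 by blast
  show "continuous_on S (pdl is (\<lambda>q. poly P (q $ 3)))"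
    unfolding Q by (intro continuous_intros)
  fix i :: 4 and p :: "real^4"
  have d: "((\<lambda>s. poly Q (p$3 + s * ev i $ 3)) has_real_derivative poly (pderiv Q) (p$3 + 0 * ev i $ 3) * ev i $ 3) (at 0)"
    by (rule DERIV_chain2[OF poly_DERIV]) (auto intro!: derivative_eq_intros)
  show "(\<lambda>s. pdl is (\<lambda>q. poly P (q $ 3)) (p + s *\<^sub>R ev i)) differentiable at 0"
    unfolding Q line3 real_differentiable_def using d by blast
qed

lemma smooth_ex: "\<forall>q::real^4. f q = poly P (q$3) \<Longrightarrow> smooth_fun S f"
proof -
  assume "\<forall>q::real^4. f q = poly P (q$3)"
  then have "f = (\<lambda>q. poly P (q$3))" by auto
  then show ?thesis using smooth_poly3 by simp
qed

lemma smooth_const: "smooth_fun S (\<lambda>q::real^4. c)"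
  by (rule smooth_ex[of _ "[:c:]"]) simp

lemma smooth_sq: "smooth_fun S (\<lambda>q::real^4. c * (q$3)^2)"
  by (rule smooth_ex[of _ "[:0, 0, c:]"]) (simp add: power2_eq_square algebra_simps)

lemma rank_test:
  fixes A :: "real^4^4" and u e :: "real^4"
  assumes ca: "ca \<noteq> 0" and cb: "cb \<noteq> 0" and u1: "u$1 = 1" and u4: "u$4 = 0"
    and e: "e = ev 4"
    and A: "\<And>x. A *v x = (ca * (u \<bullet> x)) *\<^sub>R u + (cb * x$4) *\<^sub>R e"
  shows "rank A = 2"
proof -
  have sub1: "range (\<lambda>x. A *v x) \<subseteq> span {u, e}"
  proof
    fix y assume "y \<in> range (\<lambda>x. A *v x)"
    then obtain x where y: "y = A *v x" by blast
    show "y \<in> span {u, e}" unfolding y A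
      by (intro span_add span_scale span_base) auto
  qed
  have ue: "u \<bullet> e = 0" using e u4 by (simp add: inner_vec_def sum_4)
  have uu: "u \<bullet> u \<noteq> 0"
  proof -
    have "u \<bullet> u = 1 + (u$2 * u$2 + u$3 * u$3)" using u1 u4 by (simp add: inner_vec_def sum_4)
    moreover have "u$2 * u$2 + u$3 * u$3 \<ge> 0" by simp
    ultimately show ?thesis by linarith
  qed
  have "A *v ((1 / (ca * (u \<bullet> u))) *\<^sub>R u) = u"
    unfolding A using ca uu u4 by (simp add: inner_scaleR_right)
  moreover have "A *v ((1 / cb) *\<^sub>R e) = e"
    unfolding A using cb ue e by (simp add: inner_scaleR_right inner_commute)
  ultimately have sub2: "{u, e} \<subseteq> range (\<lambda>x. A *v x)" by (metis insert_subset rangeI empty_subsetI)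
  have "e \<notin> span {}" using e by (simp add: vec_eq_iff)
  moreover have "u \<notin> span {e}"
  proof
    assume "u \<in> span {e}"
    then obtain k where "u = k *\<^sub>R e" by (auto simp: span_singleton)
    then have "u$1 = k * e$1" by simp
    then show False using u1 e by simp
  qed
  ultimately have d2: "dim {u, e} = 2" by (simp add: dim_insert)
  have "dim (range (\<lambda>x. A *v x)) \<le> dim {u, e}" using dim_subset[OF sub1] by simp
  moreover have "dim {u, e} \<le> dim (range (\<lambda>x. A *v x))" using dim_subset[OF sub2] .
  ultimately show ?thesis unfolding rank_dim_range using d2 by simp
qed



definition vfield :: "real poly \<Rightarrow> real poly \<Rightarrow> real poly \<Rightarrow> real poly \<Rightarrow> real^4 \<Rightarrow> real^4" where
  "vfield P1 P2 P3 P4 p = mk4 (poly P1 (p$3)) (poly P2 (p$3)) (poly P3 (p$3)) (poly P4 (p$3))"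

lemma smooth_vfield: "smooth_field S (vfield P1 P2 P3 P4)"
  unfolding smooth_field_def forall_4 vfield_def by (simp add: smooth_poly3)

lemma vfield_nth[simp]: "vfield P1 P2 P3 P4 p $ 1 = poly P1 (p$3)" "vfield P1 P2 P3 P4 p $ 2 = poly P2 (p$3)"
  "vfield P1 P2 P3 P4 p $ 3 = poly P3 (p$3)" "vfield P1 P2 P3 P4 p $ 4 = poly P4 (p$3)"
  by (simp_all add: vfield_def)

lemma Uset_sub: "p \<in> Uset G M \<Longrightarrow> p \<in> M"
  by (simp add: Uset_def)

lemma kqe_som:
  assumes a: "a \<noteq> 0"
  shows "k_quasi_einstein 2 (som_ray a) som_ray_domain"
  unfolding k_quasi_einstein_def
proof (intro exI conjI ballI)
  show "smooth_fun som_ray_domain (\<lambda>p. - 2 * a^2)" by (rule smooth_const)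
  fix p assume "p \<in> som_ray_domain"
  then have p: "p$3 > 0" by (rule dom_pos)
  show "rank (\<chi> i j. ricci (som_ray a) p (ev i) (ev j) - (- 2 * a^2) * som_ray a p $ i $ j) = 2"
  proof (rule rank_test[where ca = "4 * a^2" and cb = "- 2 * a^2" and u = "mk4 1 (a * (p$3)^2) 0 0" and e = "ev 4"])
    show "4 * a^2 \<noteq> 0" "- 2 * a^2 \<noteq> 0" using a by auto
    show "mk4 1 (a * (p$3)^2) 0 0 $ 1 = 1" "mk4 1 (a * (p$3)^2) 0 0 $ 4 = 0" "ev 4 = ev 4" by simp_all
    fix x :: "real^4"
    show "(\<chi> i j. ricci (som_ray a) p (ev i) (ev j) - (- 2 * a^2) * som_ray a p $ i $ j) *v x =
       (4 * a^2 * (mk4 1 (a * (p$3)^2) 0 0 \<bullet> x)) *\<^sub>R mk4 1 (a * (p$3)^2) 0 0 + (- 2 * a^2 * x $ 4) *\<^sub>R ev 4"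
      unfolding vec_eq_iff forall_4
      by (simp add: matrix_vector_mult_def sum_4 ricci_ev[OF p] ricc_def som_ray_def Let_def
          inner_vec_def algebra_simps power2_eq_square eval_nat_numeral)
  qed
qed

lemma ein3_som: "ein3 (som_ray a) som_ray_domain"
  unfolding ein3_def
  apply (rule exI[of _ "\<lambda>p. 0"], rule exI[of _ "\<lambda>p. - 4 * a^4"], rule exI[of _ "\<lambda>p. 0"])
  using ein3_eq by (auto simp: smooth_const dest!: dom_pos)

lemma weyl_ps_som: "weyl_pseudosym (som_ray a) som_ray_domain"
  unfolding weyl_pseudosym_def
  apply (rule exI[of _ "\<lambda>p. 2 * a^2 / 3"])
  using weyl_ps_eq by (auto simp: smooth_const dest!: dom_pos)

lemma roter_som:
  assumes a: "a \<noteq> 0"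
  shows "gen_roter (som_ray a) som_ray_domain"
  unfolding gen_roter_def
  apply (rule exI[of _ "\<lambda>p. a^2 / 2"], rule exI[of _ "\<lambda>p. 0"], rule exI[of _ "\<lambda>p. - 1 / (4 * a^2)"],
         rule exI[of _ "\<lambda>p. - 1 / (4 * a^2)"], rule exI[of _ "\<lambda>p. 0"], rule exI[of _ "\<lambda>p. 0"])
  using roter_eq[OF a] by (auto simp: smooth_const dest!: dom_pos)

lemma U_pos: "p \<in> Uset (som_ray a) som_ray_domain \<Longrightarrow> p$3 > 0"
proof -
  assume "p \<in> Uset (som_ray a) som_ray_domain"
  then have "p \<in> som_ray_domain" by (rule Uset_sub)
  then show "p$3 > 0" by (rule dom_pos)
qed

lemma dg_orth: assumes r: "p$3 \<noteq> 0" shows "gform (som_ray a) p (ginv (som_ray a) p *v vfield [:1:] [:0, 0, a:] 0 0 p)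
          (ginv (som_ray a) p *v vfield 0 0 0 [:1:] p) = 0"
    using r by (simp add: ginv_som gform_def sum_4 GI_def matrix_vector_mult_def som_ray_def Let_def)

lemma dg_ric: assumes p: "p$3 > 0" shows "ricci (som_ray a) p X Y = - 2 * a^2 * gform (som_ray a) p X Y
     + 4 * a^2 * ((vfield [:1:] [:0, 0, a:] 0 0 p \<bullet> X) * (vfield [:1:] [:0, 0, a:] 0 0 p \<bullet> Y))
     + - 2 * a^2 * ((vfield 0 0 0 [:1:] p \<bullet> X) * (vfield 0 0 0 [:1:] p \<bullet> Y))"
    by (simp add: ricci_fr[OF p] gform_fr SF_def gF_def inner_vec_def sum_4 algebra_simps power2_eq_square)

lemma deghosh_som: "gqe_de_ghosh (som_ray a) som_ray_domain"
proof -
  have H: "\<forall>p\<in>Uset (som_ray a) som_ray_domain.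
     gform (som_ray a) p (ginv (som_ray a) p *v vfield [:1:] [:0, 0, a:] 0 0 p)
          (ginv (som_ray a) p *v vfield 0 0 0 [:1:] p) = 0 \<and>
     (\<forall>X Y. ricci (som_ray a) p X Y = - 2 * a^2 * gform (som_ray a) p X Y
     + 4 * a^2 * ((vfield [:1:] [:0, 0, a:] 0 0 p \<bullet> X) * (vfield [:1:] [:0, 0, a:] 0 0 p \<bullet> Y))
     + - 2 * a^2 * ((vfield 0 0 0 [:1:] p \<bullet> X) * (vfield 0 0 0 [:1:] p \<bullet> Y)))"
  proof
    fix p assume "p \<in> Uset (som_ray a) som_ray_domain"
    then have p: "p$3 > 0" by (rule U_pos)
    then show "gform (som_ray a) p (ginv (som_ray a) p *v vfield [:1:] [:0, 0, a:] 0 0 p)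
          (ginv (som_ray a) p *v vfield 0 0 0 [:1:] p) = 0 \<and>
     (\<forall>X Y. ricci (som_ray a) p X Y = - 2 * a^2 * gform (som_ray a) p X Y
     + 4 * a^2 * ((vfield [:1:] [:0, 0, a:] 0 0 p \<bullet> X) * (vfield [:1:] [:0, 0, a:] 0 0 p \<bullet> Y))
     + - 2 * a^2 * ((vfield 0 0 0 [:1:] p \<bullet> X) * (vfield 0 0 0 [:1:] p \<bullet> Y)))"
      using dg_orth[of p a] dg_ric[OF p, of a] by simp
  qed
  show ?thesis
    unfolding gqe_de_ghosh_def Let_def
    apply (rule exI[of _ "\<lambda>p. - 2 * a^2"], rule exI[of _ "\<lambda>p. 4 * a^2"], rule exI[of _ "\<lambda>p. - 2 * a^2"],
         rule exI[of _ "vfield [:1:] [:0, 0, a:] 0 0"], rule exI[of _ "vfield 0 0 0 [:1:]"])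
    apply (intro conjI smooth_const smooth_vfield)
    by (rule H)
qed

lemma ch_v1: assumes r: "p$3 \<noteq> 0" shows
  "ginv (som_ray a) p *v vfield [:sqrt 2:] [:0, 0, sqrt 2 * a:] 0 [:1:] p = mk4 (sqrt 2) 0 0 (-1)"
  using r unfolding vec_eq_iff forall_4
  by (simp add: ginv_som sum_4 GI_def matrix_vector_mult_def field_simps power2_eq_square)

lemma ch_v2: assumes r: "p$3 \<noteq> 0" shows
  "ginv (som_ray a) p *v vfield [:1:] [:0, 0, a:] 0 [:sqrt 2:] p = mk4 1 0 0 (- sqrt 2)"
  using r unfolding vec_eq_iff forall_4
  by (simp add: ginv_som sum_4 GI_def matrix_vector_mult_def field_simps power2_eq_square)

lemma ch_orth: assumes r: "p$3 \<noteq> 0" shows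
  "gform (som_ray a) p (ginv (som_ray a) p *v vfield [:sqrt 2:] [:0, 0, sqrt 2 * a:] 0 [:1:] p)
          (ginv (som_ray a) p *v vfield [:1:] [:0, 0, a:] 0 [:sqrt 2:] p) = 0"
  unfolding ch_v1[OF r] ch_v2[OF r] by (simp add: gform_def sum_4 som_ray_def Let_def)

lemma chaki_alg:
  fixes s a xa xb xc xd ya yb yc yd r :: real
  assumes s2: "s * s = 2"
  shows "2 * a\<^sup>2 *
     ((xa + a * r\<^sup>2 * xb) * (ya + a * r\<^sup>2 * yb) +
      r * xb * (r * yb) +
      xc * yc) =
     6 * a\<^sup>2 *
     ((s * xa + r * (r * (s * a)) * xb + xd) *
      (s * ya + r * (r * (s * a)) * yb + yd)) -
     2 * a\<^sup>2 *
     ((xa + a * r\<^sup>2 * xb) * (ya + a * r\<^sup>2 * yb) -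
      r * xb * (r * yb) -
      xc * yc -
      xd * yd) -
     2 * s * a\<^sup>2 *
     ((s * xa + r * (r * (s * a)) * xb + xd) *
      (ya + r * (r * a) * yb + s * yd) +
      (xa + r * (r * a) * xb + s * xd) *
      (s * ya + r * (r * (s * a)) * yb +
       yd))"
proof -
  have e: "\<And>z. s * (s * z) = 2 * z" using s2 by (metis mult.assoc)
  show ?thesis by (simp add: algebra_simps e power2_eq_square eval_nat_numeral)
qed

lemma ch_ric: assumes p: "p$3 > 0" shows "ricci (som_ray a) p X Y = - 2 * a^2 * gform (som_ray a) p X Y
     + 6 * a^2 * ((vfield [:sqrt 2:] [:0, 0, sqrt 2 * a:] 0 [:1:] p \<bullet> X) * (vfield [:sqrt 2:] [:0, 0, sqrt 2 * a:] 0 [:1:] p \<bullet> Y))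
     + - 2 * sqrt 2 * a^2 * ((vfield [:sqrt 2:] [:0, 0, sqrt 2 * a:] 0 [:1:] p \<bullet> X) * (vfield [:1:] [:0, 0, a:] 0 [:sqrt 2:] p \<bullet> Y)
        + (vfield [:1:] [:0, 0, a:] 0 [:sqrt 2:] p \<bullet> X) * (vfield [:sqrt 2:] [:0, 0, sqrt 2 * a:] 0 [:1:] p \<bullet> Y))"
proof -
  note gen = chaki_alg[where xa="X$1" and xb="X$2" and xc="X$3" and xd="X$4"
     and ya="Y$1" and yb="Y$2" and yc="Y$3" and yd="Y$4" and r="p$3" and a=a]
  have s: "sqrt 2 * sqrt 2 = (2::real)" by simp
  show ?thesis
    apply (simp add: ricci_fr[OF p] gform_fr SF_def gF_def inner_vec_def sum_4)
    using gen[OF s] by simp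
qed

lemma chaki_som: "gqe_chaki (som_ray a) som_ray_domain"
proof -
  have H: "\<forall>p\<in>Uset (som_ray a) som_ray_domain.
     gform (som_ray a) p (ginv (som_ray a) p *v vfield [:sqrt 2:] [:0, 0, sqrt 2 * a:] 0 [:1:] p)
          (ginv (som_ray a) p *v vfield [:1:] [:0, 0, a:] 0 [:sqrt 2:] p) = 0 \<and>
     (\<forall>X Y. ricci (som_ray a) p X Y = - 2 * a^2 * gform (som_ray a) p X Y
     + 6 * a^2 * ((vfield [:sqrt 2:] [:0, 0, sqrt 2 * a:] 0 [:1:] p \<bullet> X) * (vfield [:sqrt 2:] [:0, 0, sqrt 2 * a:] 0 [:1:] p \<bullet> Y))
     + - 2 * sqrt 2 * a^2 * ((vfield [:sqrt 2:] [:0, 0, sqrt 2 * a:] 0 [:1:] p \<bullet> X) * (vfield [:1:] [:0, 0, a:] 0 [:sqrt 2:] p \<bullet> Y)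
        + (vfield [:1:] [:0, 0, a:] 0 [:sqrt 2:] p \<bullet> X) * (vfield [:sqrt 2:] [:0, 0, sqrt 2 * a:] 0 [:1:] p \<bullet> Y)))"
  proof
    fix p assume "p \<in> Uset (som_ray a) som_ray_domain"
    then have p: "p$3 > 0" by (rule U_pos)
    have o: "p$3 \<noteq> 0" using p by simp
    show "gform (som_ray a) p (ginv (som_ray a) p *v vfield [:sqrt 2:] [:0, 0, sqrt 2 * a:] 0 [:1:] p)
          (ginv (som_ray a) p *v vfield [:1:] [:0, 0, a:] 0 [:sqrt 2:] p) = 0 \<and>
     (\<forall>X Y. ricci (som_ray a) p X Y = - 2 * a^2 * gform (som_ray a) p X Y
     + 6 * a^2 * ((vfield [:sqrt 2:] [:0, 0, sqrt 2 * a:] 0 [:1:] p \<bullet> X) * (vfield [:sqrt 2:] [:0, 0, sqrt 2 * a:] 0 [:1:] p \<bullet> Y))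
     + - 2 * sqrt 2 * a^2 * ((vfield [:sqrt 2:] [:0, 0, sqrt 2 * a:] 0 [:1:] p \<bullet> X) * (vfield [:1:] [:0, 0, a:] 0 [:sqrt 2:] p \<bullet> Y)
        + (vfield [:1:] [:0, 0, a:] 0 [:sqrt 2:] p \<bullet> X) * (vfield [:sqrt 2:] [:0, 0, sqrt 2 * a:] 0 [:1:] p \<bullet> Y)))"
      using ch_orth[OF o, of a] ch_ric[OF p, of a] by simp
  qed
  show ?thesis
    unfolding gqe_chaki_def Let_def
    apply (rule exI[of _ "\<lambda>p. - 2 * a^2"], rule exI[of _ "\<lambda>p. 6 * a^2"], rule exI[of _ "\<lambda>p. - 2 * sqrt 2 * a^2"],
         rule exI[of _ "vfield [:sqrt 2:] [:0, 0, sqrt 2 * a:] 0 [:1:]"], rule exI[of _ "vfield [:1:] [:0, 0, a:] 0 [:sqrt 2:]"])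
    apply (intro conjI smooth_const smooth_vfield)
    by (rule H)
qed

definition EP :: "real \<Rightarrow> 4 \<Rightarrow> 4 \<Rightarrow> real poly" where
  "EP a i j = (if i = 2 \<and> j = 2 then [:0, 0, 2 * a^2 / 3:] else if i = 3 \<and> j = 3 then [:2 * a^2 / 3:]
     else if i = 4 \<and> j = 4 then [:- 4 * a^2 / 3:] else 0)"

definition Ef :: "real \<Rightarrow> real^4 \<Rightarrow> real^4^4" where
  "Ef a p = (\<chi> i j. poly (EP a i j) (p$3))"

lemma smooth_Ef: "smooth_tensor2 S (Ef a)"
  unfolding smooth_tensor2_def Ef_def by (simp add: smooth_poly3)

lemma pq_v: assumes r: "p$3 \<noteq> 0" shows
  "ginv (som_ray a) p *v vfield [:1:] [:0, 0, a:] 0 0 p = mk4 1 0 0 0"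
  using r unfolding vec_eq_iff forall_4
  by (simp add: ginv_som sum_4 GI_def matrix_vector_mult_def field_simps power2_eq_square)

lemma pq_cond:
  assumes p: "p$3 > 0"
  shows "(\<forall>i j. Ef a p $ i $ j = Ef a p $ j $ i) \<and>
           (\<Sum>i\<in>UNIV. \<Sum>j\<in>UNIV. ginv (som_ray a) p $ i $ j * Ef a p $ i $ j) = 0 \<and>
           (\<forall>X. (\<Sum>i\<in>UNIV. \<Sum>j\<in>UNIV. Ef a p $ i $ j * X $ i * (ginv (som_ray a) p *v vfield [:1:] [:0, 0, a:] 0 0 p) $ j) = 0) \<and>
           (\<forall>X Y. ricci (som_ray a) p X Y = (- 4 * a^2 / 3) * gform (som_ray a) p X Y
               + (10 * a^2 / 3) * ((vfield [:1:] [:0, 0, a:] 0 0 p \<bullet> X) * (vfield [:1:] [:0, 0, a:] 0 0 p \<bullet> Y))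
                 + 1 * (\<Sum>i\<in>UNIV. \<Sum>j\<in>UNIV. Ef a p $ i $ j * X $ i * Y $ j))"
proof (intro conjI allI)
  have o: "p$3 \<noteq> 0" using p by simp
  fix i j show "Ef a p $ i $ j = Ef a p $ j $ i"
    using exhaust_4[of i] exhaust_4[of j] by (auto simp: Ef_def EP_def)
next
  have o: "p$3 \<noteq> 0" using p by simp
  show "(\<Sum>i\<in>UNIV. \<Sum>j\<in>UNIV. ginv (som_ray a) p $ i $ j * Ef a p $ i $ j) = 0"
    using o by (simp add: ginv_som sum_4 GI_def Ef_def EP_def field_simps) (simp add: power2_eq_square)
next
  have o: "p$3 \<noteq> 0" using p by simp
  fix X :: "real^4"
  show "(\<Sum>i\<in>UNIV. \<Sum>j\<in>UNIV. Ef a p $ i $ j * X $ i * (ginv (som_ray a) p *v vfield [:1:] [:0, 0, a:] 0 0 p) $ j) = 0"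
    using o by (simp add: pq_v[OF o] sum_4 Ef_def EP_def)
next
  fix X Y :: "real^4"
  show "ricci (som_ray a) p X Y = (- 4 * a^2 / 3) * gform (som_ray a) p X Y
               + (10 * a^2 / 3) * ((vfield [:1:] [:0, 0, a:] 0 0 p \<bullet> X) * (vfield [:1:] [:0, 0, a:] 0 0 p \<bullet> Y))
                 + 1 * (\<Sum>i\<in>UNIV. \<Sum>j\<in>UNIV. Ef a p $ i $ j * X $ i * Y $ j)"
    by (simp add: ricci_fr[OF p] gform_fr SF_def gF_def inner_vec_def sum_4 Ef_def EP_def power2_eq_square algebra_simps)
qed

lemma pqe_som: "pseudo_qe (som_ray a) som_ray_domain"
  unfolding pseudo_qe_def Let_def
  apply (rule exI[of _ "\<lambda>p. - 4 * a^2 / 3"], rule exI[of _ "\<lambda>p. 10 * a^2 / 3"], rule exI[of _ "\<lambda>p. 1"],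
         rule exI[of _ "vfield [:1:] [:0, 0, a:] 0 0"], rule exI[of _ "Ef a"])
  apply (intro conjI smooth_const smooth_vfield smooth_Ef)
  apply (intro ballI)
  apply (rule pq_cond)
  by (erule U_pos)


theorem mainTheorem1:
  fixes a :: real
  assumes "a \<noteq> 0"
  defines "G \<equiv> som_ray a" and "M \<equiv> som_ray_domain"
  shows "cyclic_parallel_ricci G M
       \<and> k_quasi_einstein 2 G M
       \<and> ein3 G M
       \<and> gqe_chaki G M \<and> gqe_de_ghosh G M
       \<and> pseudo_qe G M
       \<and> special_ricci_gen_pseudosym G M
       \<and> weyl_pseudosym G M
       \<and> gen_roter G M
       \<and> compatible (Rtens G) (ricop G) M
       \<and> compatible (Ctens G) (ricop G) M
       \<and> compatible (Wtens G) (ricop G) M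
       \<and> compatible (Ktens G) (ricop G) M"
  unfolding G_def M_def
  using cyclic_som kqe_som[OF assms(1)] ein3_som chaki_som deghosh_som pqe_som srgp_som weyl_ps_som
    roter_som[OF assms(1)] compat_all by blast

end
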